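(* Two elements of $SB_n$ are conjugate if and only if their summit sets are identical.
   Context: Fix $n\ge 2$. $SB_n$ is the monoid with generators $\sigma_i,\sigma_i^{-1},x_i$ ($i=1,\dots,n-1$) and relations: $\sigma_i\sigma_j=\sigma_j\sigma_i$ and $x_ix_j=x_jx_i$ if $|i-j|>1$; $x_i\sigma_j=\sigma_jx_i$ if $|i-j|\ne1$; $\sigma_i\sigma_{i+1}\sigma_i=\sigma_{i+1}\sigma_i\sigma_{i+1}$; $\sigma_i\sigma_{i+1}x_i=x_{i+1}\sigma_i\sigma_{i+1}$; $\sigma_{i+1}\sigma_ix_{i+1}=x_i\sigma_{i+1}\sigma_i$; $\sigma_i\sigma_i^{-1}=\sigma_i^{-1}\sigma_i=1$. Two elements $u,v\in SB_n$ are conjugate if $v=g^{-1}ug$ for some invertible $g\in SB_n$ (equivalently $g$ in the image of the braid group, generated by $\sigma_i^{\pm1}$). $SB_n^+$ is the monoid with generators $\sigma_i,x_i$ and all relations except the last; $\doteq$ denotes equality in $SB_n^+$. $\Delta=\sigma_1\cdots\sigma_{n-1}\,\sigma_1\cdots\sigma_{n-2}\cdots\sigma_1\sigma_2\,\sigma_1$. Every element $W$ of $SB_n$ has a unique Garside (left) normal form $W=\Delta^m\overline{A}$, where $m\in\mathbb Z$ (the power of $W$) and $\overline{A}$ is a positive word (in $\sigma_i,x_i$) that is not positively equal to $\Delta Z$ for any positive $Z$ and is the lexicographically smallest positive word positively equal to itself, for the order $\sigma_1<\cdots<\sigma_{n-1}<x_1<\cdots<x_{n-1}$. The summit power of $W$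 is the maximum of the powers of all elements conjugate to $W$ (this maximum exists), and the summit set of $W$ is the set of Garside normal forms $\Delta^m\overline{A}$ of the elements conjugate to $W$ whose power $m$ equals the summit power. *)

theory Defs
  imports Main
begin

text \<open>Generators of SB_n: S i = sigma_i, Si i = sigma_i^{-1}, X i = x_i (1 <= i <= n-1).
Elements of SB_n are represented by words (lists of generators); equality in SB_n is
the congruence generated by the defining relations.\<close>

datatype gen = S nat | Si nat | X nat

fun gidx :: "gen \<Rightarrow> nat" where
  "gidx (S i) = i" | "gidx (Si i) = i" | "gidx (X i) = i"

definition valid_word :: "nat \<Rightarrow> gen list \<Rightarrow> bool" where
  "valid_word n w \<longleftrightarrow> (\<forall>g\<in>set w. 1 \<le> gidx g \<and> gidx g \<le> n - 1)"

fun is_pos_gen :: "gen \<Rightarrow> bool" where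
  "is_pos_gen (Si _) = False" | "is_pos_gen _ = True"

fun is_braid_gen :: "gen \<Rightarrow> bool" where
  "is_braid_gen (X _) = False" | "is_braid_gen _ = True"

definition pos_word :: "nat \<Rightarrow> gen list \<Rightarrow> bool" where
  "pos_word n w \<longleftrightarrow> valid_word n w \<and> (\<forall>g\<in>set w. is_pos_gen g)"

definition braid_word :: "nat \<Rightarrow> gen list \<Rightarrow> bool" where
  "braid_word n w \<longleftrightarrow> valid_word n w \<and> (\<forall>g\<in>set w. is_braid_gen g)"

definition pos_rels :: "nat \<Rightarrow> (gen list \<times> gen list) set" where
  "pos_rels n =
     {([S i, S j], [S j, S i]) | i j. 1 \<le> i \<and> i \<le> n - 1 \<and> 1 \<le> j \<and> j \<le> n - 1 \<and> (i + 1 < j \<or> j + 1 < i)}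
   \<union> {([X i, X j], [X j, X i]) | i j. 1 \<le> i \<and> i \<le> n - 1 \<and> 1 \<le> j \<and> j \<le> n - 1 \<and> (i + 1 < j \<or> j + 1 < i)}
   \<union> {([X i, S j], [S j, X i]) | i j. 1 \<le> i \<and> i \<le> n - 1 \<and> 1 \<le> j \<and> j \<le> n - 1 \<and> i \<noteq> j + 1 \<and> j \<noteq> i + 1}
   \<union> {([S i, S (i+1), S i], [S (i+1), S i, S (i+1)]) | i. 1 \<le> i \<and> i + 1 \<le> n - 1}
   \<union> {([S i, S (i+1), X i], [X (i+1), S i, S (i+1)]) | i. 1 \<le> i \<and> i + 1 \<le> n - 1}
   \<union> {([S (i+1), S i, X (i+1)], [X i, S (i+1), S i]) | i. 1 \<le> i \<and> i + 1 \<le> n - 1}"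

definition sb_rels :: "nat \<Rightarrow> (gen list \<times> gen list) set" where
  "sb_rels n = pos_rels n \<union> {([S i, Si i], []) | i. 1 \<le> i \<and> i \<le> n - 1}
                          \<union> {([Si i, S i], []) | i. 1 \<le> i \<and> i \<le> n - 1}"

definition rew_step :: "(gen list \<times> gen list) set \<Rightarrow> (gen list \<times> gen list) set" where
  "rew_step R = {(u @ l @ v, u @ r @ v) | u l r v. (l, r) \<in> R \<or> (r, l) \<in> R}"

definition peq :: "nat \<Rightarrow> gen list \<Rightarrow> gen list \<Rightarrow> bool" where
  "peq n u v \<longleftrightarrow> (u, v) \<in> (rew_step (pos_rels n))\<^sup>*"

definition sbeq :: "nat \<Rightarrow> gen list \<Rightarrow> gen list \<Rightarrow> bool" where
  "sbeq n u v \<longleftrightarrow> (u, v) \<in> (rew_step (sb_rels n))\<^sup>*"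

fun ginv :: "gen \<Rightarrow> gen" where
  "ginv (S i) = Si i" | "ginv (Si i) = S i" | "ginv (X i) = X i"

text \<open>Inverse of a braid word (only meaningful for braid words).\<close>
definition inv_word :: "gen list \<Rightarrow> gen list" where
  "inv_word w = rev (map ginv w)"

definition delta :: "nat \<Rightarrow> gen list" where
  "delta n = concat [map S [1..<k+1]. k \<leftarrow> rev [1..<n]]"

definition delta_pow :: "nat \<Rightarrow> int \<Rightarrow> gen list" where
  "delta_pow n m = (if 0 \<le> m then concat (replicate (nat m) (delta n))
                    else concat (replicate (nat (- m)) (inv_word (delta n))))"

text \<open>Order sigma_1 < ... < sigma_{n-1} < x_1 < ... < x_{n-1}, extended lexicographically.\<close>
fun gkey :: "nat \<Rightarrow> gen \<Rightarrow> nat" where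
  "gkey n (S i) = i" | "gkey n (X i) = n + i" | "gkey n (Si i) = 2 * n + i"

definition lex_le :: "nat \<Rightarrow> gen list \<Rightarrow> gen list \<Rightarrow> bool" where
  "lex_le n a b \<longleftrightarrow> a = b \<or> (map (gkey n) a, map (gkey n) b) \<in> lexord {(p, q). p < q}"

text \<open>Conjugacy in SB_n by an invertible element (a braid word g).\<close>
definition sb_conj :: "nat \<Rightarrow> gen list \<Rightarrow> gen list \<Rightarrow> bool" where
  "sb_conj n u v \<longleftrightarrow> (\<exists>g. braid_word n g \<and> sbeq n v (inv_word g @ u @ g))"

definition is_garside_nf :: "nat \<Rightarrow> gen list \<Rightarrow> int \<Rightarrow> gen list \<Rightarrow> bool" where
  "is_garside_nf n W m A \<longleftrightarrow>
     pos_word n A \<and> sbeq n W (delta_pow n m @ A) \<and>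
     \<not> (\<exists>Z. pos_word n Z \<and> peq n A (delta n @ Z)) \<and>
     (\<forall>B. pos_word n B \<and> peq n B A \<longrightarrow> lex_le n A B)"

text \<open>Summit power: the maximum power among conjugates (exists by the paper).\<close>
definition summit_power :: "nat \<Rightarrow> gen list \<Rightarrow> int" where
  "summit_power n W = (GREATEST m. \<exists>W' A. valid_word n W' \<and> sb_conj n W W' \<and> is_garside_nf n W' m A)"

definition summit_set :: "nat \<Rightarrow> gen list \<Rightarrow> (int \<times> gen list) set" where
  "summit_set n W = {(m, A). \<exists>W'. valid_word n W' \<and> sb_conj n W W' \<and> is_garside_nf n W' m A
                                 \<and> m = summit_power n W}"

end

theory Submission
  imports Defs
begin


lemma rs_sym: "(a,b) \<in> rew_step R \<Longrightarrow> (b,a) \<in> rew_step R"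
  unfolding rew_step_def by blast

lemma rs_ctx: assumes "(a,b) \<in> rew_step R" shows "(u@a@v, u@b@v) \<in> rew_step R"
proof -
  from assms obtain u' l r v' where h: "a = u'@l@v'" "b = u'@r@v'" "(l,r) \<in> R \<or> (r,l) \<in> R"
    unfolding rew_step_def by blast
  have "(u@a@v, u@b@v) = ((u@u')@l@(v'@v), (u@u')@r@(v'@v))" using h by simp
  thus ?thesis using h(3) unfolding rew_step_def by blast
qed

lemma rtc_sym: "(a,b) \<in> (rew_step R)\<^sup>* \<Longrightarrow> (b,a) \<in> (rew_step R)\<^sup>*"
  by (induction rule: rtrancl_induct) (auto intro: rs_sym converse_rtrancl_into_rtrancl)

lemma rtc_ctx: "(a,b) \<in> (rew_step R)\<^sup>* \<Longrightarrow> (u@a@v, u@b@v) \<in> (rew_step R)\<^sup>*"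
  by (induction rule: rtrancl_induct) (auto intro: rs_ctx rtrancl_into_rtrancl)

lemma rtc_base: "(l,r) \<in> R \<Longrightarrow> (l,r) \<in> (rew_step R)\<^sup>*"
proof -
  assume "(l,r) \<in> R"
  hence "([]@l@[], []@r@[]) \<in> rew_step R" unfolding rew_step_def by blast
  thus ?thesis by simp
qed

lemma peq_refl: "peq n a a" unfolding peq_def by simp
lemma peq_sym: "peq n a b \<Longrightarrow> peq n b a" unfolding peq_def by (rule rtc_sym)
lemma peq_trans[trans]: "peq n a b \<Longrightarrow> peq n b c \<Longrightarrow> peq n a c" unfolding peq_def by simp
lemma peq_ctx: "peq n a b \<Longrightarrow> peq n (u@a@v) (u@b@v)" unfolding peq_def by (rule rtc_ctx)
lemma peq_rel: "(l,r) \<in> pos_rels n \<Longrightarrow> peq n l r" unfolding peq_def by (rule rtc_base)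
lemma peq_app: "peq n a b \<Longrightarrow> peq n c d \<Longrightarrow> peq n (a@c) (b@d)"
  using peq_ctx[of n a b "[]" c] peq_ctx[of n c d b "[]"] by (auto intro: peq_trans)

lemma sbeq_refl: "sbeq n a a" unfolding sbeq_def by simp
lemma sbeq_sym: "sbeq n a b \<Longrightarrow> sbeq n b a" unfolding sbeq_def by (rule rtc_sym)
lemma sbeq_trans[trans]: "sbeq n a b \<Longrightarrow> sbeq n b c \<Longrightarrow> sbeq n a c" unfolding sbeq_def by simp
lemma sbeq_ctx: "sbeq n a b \<Longrightarrow> sbeq n (u@a@v) (u@b@v)" unfolding sbeq_def by (rule rtc_ctx)
lemma sbeq_rel: "(l,r) \<in> sb_rels n \<Longrightarrow> sbeq n l r" unfolding sbeq_def by (rule rtc_base)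
lemma sbeq_app: "sbeq n a b \<Longrightarrow> sbeq n c d \<Longrightarrow> sbeq n (a@c) (b@d)"
  using sbeq_ctx[of n a b "[]" c] sbeq_ctx[of n c d b "[]"] by (auto intro: sbeq_trans)

lemma rs_mono: "R \<subseteq> R' \<Longrightarrow> rew_step R \<subseteq> rew_step R'"
  unfolding rew_step_def by blast

lemma peq_sbeq: "peq n a b \<Longrightarrow> sbeq n a b"
proof -
  have "rew_step (pos_rels n) \<subseteq> rew_step (sb_rels n)" by (rule rs_mono) (auto simp: sb_rels_def)
  thus "peq n a b \<Longrightarrow> sbeq n a b" unfolding peq_def sbeq_def using rtrancl_mono by blast
qed

lemma rtc_inv: assumes "\<And>l r. (l,r) \<in> R \<Longrightarrow> f l = f r"
  and "\<And>a b c. f (a @ b @ c) = f a + f b + f c"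
  and "(a,b) \<in> (rew_step R)\<^sup>*" shows "f a = f b"
  using assms(3)
proof (induction rule: rtrancl_induct)
  case (step y z)
  then obtain u l r v where "y = u@l@v" "z = u@r@v" "(l,r) \<in> R \<or> (r,l) \<in> R"
    unfolding rew_step_def by blast
  then show ?case using step assms(1,2) by (metis)
qed simp



definition cc :: "nat \<Rightarrow> gen list" where "cc k = map S [1..<Suc k]"
definition DD :: "nat \<Rightarrow> gen list" where
  "DD k = concat (map (\<lambda>m. map S [1..<Suc m]) (rev [1..<Suc k]))"

lemma DD_0[simp]: "DD 0 = []" by (simp add: DD_def)
lemma DD_Suc: "DD (Suc k) = cc (Suc k) @ DD k" by (simp add: DD_def cc_def)
lemma cc_0[simp]: "cc 0 = []" by (simp add: cc_def)
lemma cc_Suc: "cc (Suc k) = cc k @ [S (Suc k)]" by (simp add: cc_def)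
lemma delta_DD: "n \<ge> 1 \<Longrightarrow> delta n = DD (n - 1)"
  by (simp add: delta_def DD_def)

lemma cc_split: assumes "1 \<le> j" "j < k"
  shows "cc k = map S [1..<j] @ [S j, S (Suc j)] @ map S [Suc (Suc j)..<Suc k]"
proof -
  have "[1..<Suc k] = [1..<j] @ [j..<Suc k]" using assms by (metis le_SucI less_imp_le_nat upt_add_eq_append le_add_diff_inverse) 
  moreover have "[j..<Suc k] = j # Suc j # [Suc (Suc j)..<Suc k]" using assms by (simp add: upt_conv_Cons)
  ultimately show ?thesis by (simp add: cc_def)
qed

lemma set_cc: "set (cc k) = S ` {1..k}" by (auto simp: cc_def)
lemma set_DD: "set (DD k) = S ` {1..k}"
  by (induction k) (auto simp: DD_Suc set_cc)

lemma rc: assumes "T = S \<or> T = X" "1 \<le> i" "i \<le> n-1" "1 \<le> j" "j \<le> n-1" "i+1<j \<or> j+1<i"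
  shows "peq n [T i, S j] [S j, T i]"
  using assms by (auto intro!: peq_rel simp: pos_rels_def)

lemma ra: assumes "T = S \<or> T = X" "1 \<le> i" "i+1 \<le> n-1"
  shows "peq n [S i, S (Suc i), T i] [T (Suc i), S i, S (Suc i)]"
  using assms by (auto intro!: peq_rel simp: pos_rels_def)

lemma rb: assumes "T = S \<or> T = X" "1 \<le> i" "i+1 \<le> n-1"
  shows "peq n [S (Suc i), S i, T (Suc i)] [T i, S (Suc i), S i]"
  using assms(1)
proof
  assume "T = S" thus ?thesis using assms by (auto intro!: peq_sym[OF peq_rel] simp: pos_rels_def)
next
  assume "T = X" thus ?thesis using assms by (auto intro!: peq_rel simp: pos_rels_def)
qed

lemma rx1: assumes "T = S \<or> T = X" "1 \<le> i" "i \<le> n-1"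
  shows "peq n [S i, T i] [T i, S i]"
  using assms(1)
proof
  assume "T = S" thus ?thesis by (simp add: peq_refl)
next
  assume "T = X" thus ?thesis using assms by (auto intro!: peq_sym[OF peq_rel] simp: pos_rels_def)
qed

lemma comm_list: "(\<forall>b\<in>set Q. peq n [a,b] [b,a]) \<Longrightarrow> peq n (a # Q) (Q @ [a])"
proof (induction Q)
  case Nil then show ?case by (simp add: peq_refl)
next
  case (Cons b Q)
  have "peq n ([]@[a,b]@Q) ([]@[b,a]@Q)" using Cons.prems by (intro peq_ctx) simp
  moreover have "peq n ([b]@(a#Q)@[]) ([b]@(Q@[a])@[])" using Cons by (intro peq_ctx) simp
  ultimately show ?case by (simp add: peq_trans)
qed

lemma comm_list': "(\<forall>b\<in>set Q. peq n [a,b] [b,a]) \<Longrightarrow> peq n (Q @ [a]) (a # Q)"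
  using comm_list peq_sym by blast

lemma C1: assumes T: "T = S \<or> T = X" and j: "1 \<le> j" "j < k" and k: "k \<le> n-1"
  shows "peq n (cc k @ [T j]) (T (Suc j) # cc k)"
proof -
  define A where "A = map S [1..<j]"
  define B where "B = map S [Suc (Suc j)..<Suc k]"
  have cck: "cc k = A @ [S j, S (Suc j)] @ B" using cc_split[OF j] A_def B_def by simp
  have "peq n (B @ [T j]) (T j # B)"
    by (rule comm_list') (use j k in \<open>auto simp: B_def intro!: rc[OF T]\<close>)
  hence "peq n ((A @ [S j, S (Suc j)]) @ (B @ [T j]) @ []) ((A @ [S j, S (Suc j)]) @ (T j # B) @ [])"
    by (rule peq_ctx)
  hence 1: "peq n (cc k @ [T j]) (A @ [S j, S (Suc j), T j] @ B)" by (simp add: cck)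
  have "peq n (A @ [S j, S (Suc j), T j] @ B) (A @ [T (Suc j), S j, S (Suc j)] @ B)"
    by (rule peq_ctx, rule ra[OF T]) (use j k in auto)
  moreover have "peq n ([] @ (A @ [T (Suc j)]) @ [S j, S (Suc j)] @ B) ([] @ (T (Suc j) # A) @ [S j, S (Suc j)] @ B)"
    by (rule peq_ctx, rule comm_list') (use j k in \<open>auto simp: A_def intro!: rc[OF T]\<close>)
  ultimately show ?thesis using 1 cck by (auto intro: peq_trans)
qed



lemma F: assumes T: "T = S \<or> T = X" shows "1 \<le> k \<Longrightarrow> k \<le> n-1 \<Longrightarrow> peq n (cc k @ cc (k-1) @ [T k]) (T 1 # cc k @ cc (k-1))"
proof (induction k)
  case 0 then show ?case by simp
next
  case (Suc k')
  show ?case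
  proof (cases "k' = 0")
    case True
    then show ?thesis using rx1[OF T, of 1 n] Suc.prems by (simp add: cc_def)
  next
    case False
    define K where "K = Suc k'"
    define P where "P = cc (k'-1)"
    have ck': "cc k' = P @ [S k']" using False by (simp add: P_def) (metis Suc_pred cc_Suc neq0_conv)
    have ccK: "cc K = cc k' @ [S K]" by (simp add: K_def cc_Suc)
    have kn: "K \<le> n-1" using Suc.prems K_def by simp
    have comm: "peq n (S K # P) (P @ [S K])"
      by (rule comm_list) (use False kn in \<open>auto simp: P_def set_cc K_def intro!: rc[of S]\<close>)
    have a: "peq n (cc K @ cc k' @ [T K]) (cc k' @ P @ [S K, S k', T K])"
      using peq_ctx[OF comm, of "cc k'" "[S k', T K]"] by (simp add: ccK ck')
    have b: "peq n (cc k' @ P @ [S K, S k', T K]) (cc k' @ P @ [T k', S K, S k'])"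
      using peq_ctx[OF rb[OF T, of k' n], of "cc k' @ P" "[]"] False kn by (simp add: K_def)
    have ih: "peq n (cc k' @ cc (k'-1) @ [T k']) (T 1 # cc k' @ cc (k'-1))"
      using Suc.IH False Suc.prems by simp
    have c: "peq n (cc k' @ P @ [T k', S K, S k']) (T 1 # cc k' @ P @ [S K, S k'])"
      using peq_ctx[OF ih, of "[]" "[S K, S k']"] by (simp add: P_def)
    have d: "peq n (T 1 # cc k' @ P @ [S K, S k']) (T 1 # cc k' @ [S K] @ P @ [S k'])"
      using peq_ctx[OF peq_sym[OF comm], of "T 1 # cc k'" "[S k']"] by simp
    have "peq n (cc K @ cc k' @ [T K]) (T 1 # cc K @ cc k')"
      using peq_trans[OF a peq_trans[OF b peq_trans[OF c d]]] by (simp add: ccK ck')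
    then show ?thesis by (simp add: K_def)
  qed
qed

lemma Q1: assumes T: "T = S \<or> T = X"
  shows "k \<le> n-1 \<Longrightarrow> 1 \<le> j \<Longrightarrow> j \<le> k \<Longrightarrow> peq n (DD k @ [T j]) (T (k+1-j) # DD k)"
proof (induction k arbitrary: j)
  case 0 then show ?case by simp
next
  case (Suc k')
  show ?case
  proof (cases "j \<le> k'")
    case True
    have ih: "peq n (DD k' @ [T j]) (T (k'+1-j) # DD k')" using Suc True by simp
    have 1: "peq n (DD (Suc k') @ [T j]) (cc (Suc k') @ [T (k'+1-j)] @ DD k')"
      using peq_ctx[OF ih, of "cc (Suc k')" "[]"] by (simp add: DD_Suc)
    have c1: "peq n (cc (Suc k') @ [T (k'+1-j)]) (T (Suc (k'+1-j)) # cc (Suc k'))"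
      by (rule C1[OF T]) (use True Suc.prems in auto)
    have 2: "peq n (cc (Suc k') @ [T (k'+1-j)] @ DD k') (T (Suc (k'+1-j)) # DD (Suc k'))"
      using peq_ctx[OF c1, of "[]" "DD k'"] by (simp add: DD_Suc)
    have "Suc (k'+1-j) = Suc k' + 1 - j" using True by simp
    then show ?thesis using peq_trans[OF 1 2] by simp
  next
    case False
    hence j: "j = Suc k'" using Suc.prems by simp
    show ?thesis
    proof (cases "k' = 0")
      case True
      then show ?thesis using rx1[OF T, of 1 n] Suc.prems j by (simp add: DD_Suc cc_def)
    next
      case False
      then obtain k'' where k'': "k' = Suc k''" by (cases k') auto
      have DDe: "DD (Suc k') = cc (Suc k') @ cc k' @ DD k''" by (simp add: DD_Suc k'')
      have comm: "peq n (DD k'' @ [T j]) (T j # DD k'')"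
        by (rule comm_list') (use Suc.prems j in \<open>auto simp: set_DD k'' intro!: rc[OF T]\<close>)
      have 1: "peq n (DD (Suc k') @ [T j]) (cc (Suc k') @ cc k' @ [T j] @ DD k'')"
        using peq_ctx[OF comm, of "cc (Suc k') @ cc k'" "[]"] by (simp add: DDe)
      have f: "peq n (cc (Suc k') @ cc k' @ [T (Suc k')]) (T 1 # cc (Suc k') @ cc k')"
        using F[OF T, of "Suc k'" n] Suc.prems by simp
      have 2: "peq n (cc (Suc k') @ cc k' @ [T j] @ DD k'') (T 1 # DD (Suc k'))"
        using peq_ctx[OF f, of "[]" "DD k''"] by (simp add: DDe j)
      show ?thesis using peq_trans[OF 1 2] j by simp
    qed
  qed
qed

lemma shift: assumes k: "k \<le> n-1"
  shows "(\<forall>j\<in>set js. 1 \<le> j \<and> j < k) \<Longrightarrow> peq n (cc k @ map S js) (map (S \<circ> Suc) js @ cc k)"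
proof (induction js rule: rev_induct)
  case Nil then show ?case by (simp add: peq_refl)
next
  case (snoc j js)
  have ih: "peq n (cc k @ map S js) (map (S \<circ> Suc) js @ cc k)" by (rule snoc.IH) (use snoc.prems in simp)
  have 1: "peq n (cc k @ map S (js @ [j])) (map (S \<circ> Suc) js @ cc k @ [S j])"
    using peq_ctx[OF ih, of "[]" "[S j]"] by simp
  have c1: "peq n (cc k @ [S j]) (S (Suc j) # cc k)"
    by (rule C1) (use snoc.prems k in auto)
  have 2: "peq n (map (S \<circ> Suc) js @ cc k @ [S j]) (map (S \<circ> Suc) (js @ [j]) @ cc k)"
    using peq_ctx[OF c1, of "map (S \<circ> Suc) js" "[]"] by simp
  show ?case using peq_trans[OF 1 2] .
qed

definition dl :: "nat \<Rightarrow> nat list" where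
  "dl k = concat (map (\<lambda>m. [1..<Suc m]) (rev [1..<Suc k]))"

lemma DD_dl: "DD k = map S (dl k)" unfolding DD_def dl_def map_concat by (simp add: comp_def del: upt_Suc)
lemma set_dl: "set (dl k) = {1..k}"
  using set_DD[of k] by (auto simp: DD_dl)

lemma Q2: "k \<le> n-1 \<Longrightarrow> 1 \<le> i \<Longrightarrow> i \<le> k \<Longrightarrow> \<exists>L. set L \<subseteq> S ` {1..k} \<and> peq n (DD k) (L @ [S i])"
proof (induction k)
  case 0 then show ?case by simp
next
  case (Suc k')
  show ?case
  proof (cases "i \<le> k'")
    case True
    then obtain L where L: "set L \<subseteq> S ` {1..k'}" "peq n (DD k') (L @ [S i])" using Suc by auto
    have "peq n (DD (Suc k')) ((cc (Suc k') @ L) @ [S i])"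
      using peq_ctx[OF L(2), of "cc (Suc k')" "[]"] by (simp add: DD_Suc)
    moreover have "set (cc (Suc k') @ L) \<subseteq> S ` {1..Suc k'}" using L(1) by (auto simp: set_cc)
    ultimately show ?thesis by blast
  next
    case False
    hence i: "i = Suc k'" using Suc.prems by simp
    have "peq n (cc (Suc k') @ map S (dl k')) (map (S \<circ> Suc) (dl k') @ cc (Suc k'))"
      by (rule shift) (use Suc.prems in \<open>auto simp: set_dl\<close>)
    moreover have "DD (Suc k') = cc (Suc k') @ map S (dl k')" by (subst DD_Suc) (simp only: DD_dl)
    ultimately have "peq n (DD (Suc k')) ((map (S \<circ> Suc) (dl k') @ cc k') @ [S i])"
      by (simp add: cc_Suc i)
    moreover have "set (map (S \<circ> Suc) (dl k') @ cc k') \<subseteq> S ` {1..Suc k'}"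
      by (auto simp: set_dl set_cc)
    ultimately show ?thesis by blast
  qed
qed



lemma pos_word_Cons: "pos_word n (a # w) \<longleftrightarrow> 1 \<le> gidx a \<and> gidx a \<le> n-1 \<and> is_pos_gen a \<and> pos_word n w"
  by (auto simp: pos_word_def valid_word_def)
lemma pos_word_app: "pos_word n (a @ b) \<longleftrightarrow> pos_word n a \<and> pos_word n b"
  by (auto simp: pos_word_def valid_word_def)
lemma pos_word_Nil[simp]: "pos_word n []" by (simp add: pos_word_def valid_word_def)

lemma Q1w: assumes n: "n \<ge> 2" shows "pos_word n P \<Longrightarrow> \<exists>P'. pos_word n P' \<and> peq n (delta n @ P) (P' @ delta n)"
proof (induction P)
  case Nil then show ?case by (auto intro!: exI[of _ "[]"] peq_refl)
next
  case (Cons a P)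
  then obtain P' where P': "pos_word n P'" "peq n (delta n @ P) (P' @ delta n)" by (auto simp: pos_word_Cons)
  have "\<exists>a'. pos_word n [a'] \<and> peq n (delta n @ [a]) (a' # delta n)"
  proof -
    from Cons.prems obtain T j where Tj: "T = S \<or> T = X" "a = T j" "1 \<le> j" "j \<le> n-1"
      by (cases a) (auto simp: pos_word_Cons)
    have "peq n (DD (n-1) @ [T j]) (T (n-1+1-j) # DD (n-1))" by (rule Q1) (use Tj in auto)
    moreover have "pos_word n [T (n-1+1-j)]" using Tj n by (auto simp: pos_word_Cons)
    ultimately show ?thesis using n Tj by (auto simp: delta_DD)
  qed
  then obtain a' where a': "pos_word n [a']" "peq n (delta n @ [a]) (a' # delta n)" by blast
  have "peq n (delta n @ a # P) ([a'] @ delta n @ P)"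
    using peq_ctx[OF a'(2), of "[]" P] by simp
  also have "peq n ([a'] @ delta n @ P) ([a'] @ (P' @ delta n) @ [])"
    using peq_ctx[OF P'(2), of "[a']" "[]"] by simp
  finally have "peq n (delta n @ a # P) ((a' # P') @ delta n)" by simp
  then show ?case using a'(1) P'(1) by (intro exI[of _ "a' # P'"]) (auto simp: pos_word_Cons)
qed

lemma Q2w: assumes n: "n \<ge> 2" "1 \<le> i" "i \<le> n-1"
  shows "\<exists>L. pos_word n L \<and> peq n (delta n) (L @ [S i])"
proof -
  obtain L where L: "set L \<subseteq> S ` {1..n-1}" "peq n (DD (n-1)) (L @ [S i])"
    using Q2[of "n-1" n i] n by auto
  have "pos_word n L" using L(1) by (auto simp: pos_word_def valid_word_def)
  thus ?thesis using L n by (auto simp: delta_DD)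
qed

lemma inv_word_Cons: "inv_word (a # g) = inv_word g @ [ginv a]" by (simp add: inv_word_def)
lemma inv_word_Nil[simp]: "inv_word [] = []" by (simp add: inv_word_def)
lemma inv_word_app: "inv_word (a @ b) = inv_word b @ inv_word a" by (simp add: inv_word_def)
lemma ginv_ginv[simp]: "ginv (ginv a) = a" by (cases a) auto
lemma inv_inv[simp]: "inv_word (inv_word g) = g" by (simp add: inv_word_def rev_map comp_def)

lemma braid_word_Cons: "braid_word n (a # w) \<longleftrightarrow> 1 \<le> gidx a \<and> gidx a \<le> n-1 \<and> is_braid_gen a \<and> braid_word n w"
  by (auto simp: braid_word_def valid_word_def)
lemma braid_word_app: "braid_word n (a @ b) \<longleftrightarrow> braid_word n a \<and> braid_word n b"
  by (auto simp: braid_word_def valid_word_def)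
lemma braid_word_Nil[simp]: "braid_word n []" by (simp add: braid_word_def valid_word_def)
lemma braid_inv: "braid_word n g \<Longrightarrow> braid_word n (inv_word g)"
proof (induction g)
  case (Cons a g) then show ?case by (cases a) (auto simp: inv_word_Cons braid_word_app braid_word_Cons)
qed simp

lemma letter_inv: assumes "1 \<le> gidx a" "gidx a \<le> n-1" "is_braid_gen a"
  shows "sbeq n [a, ginv a] []"
  using assms by (cases a) (auto intro!: sbeq_rel simp: sb_rels_def)

lemma braid_cancel: "braid_word n g \<Longrightarrow> sbeq n (g @ inv_word g) []"
proof (induction g)
  case Nil then show ?case by (simp add: sbeq_refl)
next
  case (Cons a g)
  have "sbeq n ([a] @ (g @ inv_word g) @ [ginv a]) ([a] @ [] @ [ginv a])"
    using Cons by (intro sbeq_ctx) (simp add: braid_word_Cons)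
  moreover have "sbeq n [a, ginv a] []" using Cons.prems by (intro letter_inv) (auto simp: braid_word_Cons)
  ultimately show ?case by (auto simp: inv_word_Cons intro: sbeq_trans)
qed

lemma braid_cancel': "braid_word n g \<Longrightarrow> sbeq n (inv_word g @ g) []"
  using braid_cancel[of n "inv_word g"] braid_inv by simp

lemma delta_braid: "braid_word n (delta n)"
  by (auto simp: delta_def braid_word_def valid_word_def)

lemma delta_pos: "pos_word n (delta n)"
  by (auto simp: delta_def pos_word_def valid_word_def)

lemma pos_peq_sbeq: "peq n a b \<Longrightarrow> sbeq n a b" by (rule peq_sbeq)

lemma move_inv: assumes n: "n \<ge> 2" and P: "pos_word n P"
  shows "\<exists>P'. pos_word n P' \<and> sbeq n (P @ inv_word (delta n)) (inv_word (delta n) @ P')"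
proof -
  obtain P' where P': "pos_word n P'" "peq n (delta n @ P) (P' @ delta n)" using Q1w[OF n P] by blast
  let ?d = "delta n" and ?d' = "inv_word (delta n)"
  have "sbeq n (P @ ?d') ([] @ P @ ?d')" by (simp add: sbeq_refl)
  also have "sbeq n ([] @ P @ ?d') ((?d' @ ?d) @ P @ ?d')"
    using sbeq_ctx[OF sbeq_sym[OF braid_cancel'[OF delta_braid[of n]]], of "[]" "P @ ?d'"] by simp
  also have "sbeq n ((?d' @ ?d) @ P @ ?d') (?d' @ (?d @ P) @ ?d')" by (simp add: sbeq_refl)
  also have "sbeq n (?d' @ (?d @ P) @ ?d') (?d' @ (P' @ ?d) @ ?d')"
    by (rule sbeq_ctx, rule peq_sbeq, rule P'(2))
  also have "sbeq n (?d' @ (P' @ ?d) @ ?d') ((?d' @ P') @ (?d @ ?d') @ [])" by (simp add: sbeq_refl)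
  also have "sbeq n ((?d' @ P') @ (?d @ ?d') @ []) ((?d' @ P') @ [] @ [])"
    by (rule sbeq_ctx, rule braid_cancel[OF delta_braid[of n]])
  finally show ?thesis using P'(1) by auto
qed

lemma Si_delta: assumes n: "n \<ge> 2" "1 \<le> i" "i \<le> n-1"
  shows "\<exists>L. pos_word n L \<and> sbeq n [Si i] (inv_word (delta n) @ L)"
proof -
  obtain L where L: "pos_word n L" "peq n (delta n) (L @ [S i])" using Q2w[OF n] by blast
  let ?d = "delta n" and ?d' = "inv_word (delta n)"
  have "sbeq n ([] @ [Si i] @ []) ((?d' @ ?d) @ [Si i] @ [])"
    using sbeq_ctx[OF sbeq_sym[OF braid_cancel'[OF delta_braid[of n]]], of "[]" "[Si i]"] by simp
  also have "sbeq n ((?d' @ ?d) @ [Si i] @ []) (?d' @ ?d @ [Si i])" by (simp add: sbeq_refl)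
  also have "sbeq n (?d' @ ?d @ [Si i]) (?d' @ (L @ [S i]) @ [Si i])"
    by (rule sbeq_ctx, rule peq_sbeq, rule L(2))
  also have "sbeq n (?d' @ (L @ [S i]) @ [Si i]) ((?d' @ L) @ [S i, Si i] @ [])" by (simp add: sbeq_refl)
  also have "sbeq n ((?d' @ L) @ [S i, Si i] @ []) ((?d' @ L) @ [] @ [])"
    by (rule sbeq_ctx) (use letter_inv[of "S i" n] n in simp)
  finally show ?thesis using L(1) by auto
qed

lemma dp_minus: "sbeq n (delta_pow n m @ inv_word (delta n)) (delta_pow n (m-1))"
proof (cases "m \<ge> 1")
  case True
  then obtain k where k: "nat m = Suc k" by (cases "nat m") auto
  have "delta_pow n m = delta_pow n (m-1) @ delta n"
    using True k by (simp add: delta_pow_def nat_diff_distrib' replicate_append_same[symmetric])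
  then show ?thesis
    using sbeq_ctx[OF braid_cancel[OF delta_braid[of n]], of "delta_pow n (m-1)" "[]"] by simp
next
  case False
  hence "nat (-(m-1)) = Suc (nat (-m))" by simp
  then show ?thesis using False
    by (simp add: delta_pow_def replicate_append_same[symmetric] sbeq_refl)
qed

lemma dp_plus: "sbeq n (delta_pow n m @ delta n) (delta_pow n (m+1))"
proof (cases "m \<ge> 0")
  case True
  hence "nat (m+1) = Suc (nat m)" by simp
  then show ?thesis using True
    by (simp add: delta_pow_def replicate_append_same[symmetric] sbeq_refl)
next
  case False
  have "nat (-m) = Suc (nat (-(m+1)))" using False by simp
  hence "delta_pow n m = delta_pow n (m+1) @ inv_word (delta n)"
    using False by (simp add: delta_pow_def replicate_append_same[symmetric])
  then show ?thesis
    using sbeq_ctx[OF braid_cancel'[OF delta_braid[of n]], of "delta_pow n (m+1)" "[]"] by simp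
qed

lemma E1: assumes n: "n \<ge> 2"
  shows "valid_word n u \<Longrightarrow> \<exists>m A. pos_word n A \<and> sbeq n u (delta_pow n m @ A)"
proof (induction u rule: rev_induct)
  case Nil
  have "delta_pow n 0 = []" by (simp add: delta_pow_def)
  then show ?case by (auto intro!: exI[of _ 0] exI[of _ "[]"] sbeq_refl)
next
  case (snoc g u)
  have gv: "1 \<le> gidx g" "gidx g \<le> n-1" using snoc.prems by (auto simp: valid_word_def)
  have "valid_word n u" using snoc.prems by (auto simp: valid_word_def)
  then obtain m A where A: "pos_word n A" "sbeq n u (delta_pow n m @ A)" using snoc.IH by blast
  have 1: "sbeq n (u @ [g]) (delta_pow n m @ A @ [g])"
    using sbeq_ctx[OF A(2), of "[]" "[g]"] by simp
  show ?case
  proof (cases "is_pos_gen g")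
    case True
    then show ?thesis using 1 A(1) gv by (intro exI[of _ m] exI[of _ "A @ [g]"]) (auto simp: pos_word_app pos_word_Cons)
  next
    case False
    then obtain i where g: "g = Si i" by (cases g) auto
    obtain L where L: "pos_word n L" "sbeq n [Si i] (inv_word (delta n) @ L)"
      using Si_delta[OF n, of i] gv g by auto
    obtain A' where A': "pos_word n A'" "sbeq n (A @ inv_word (delta n)) (inv_word (delta n) @ A')"
      using move_inv[OF n A(1)] by blast
    have "sbeq n (u @ [g]) (delta_pow n m @ A @ [Si i])" using 1 g by simp
    also have "sbeq n (delta_pow n m @ A @ [Si i]) ((delta_pow n m @ A) @ (inv_word (delta n) @ L) @ [])"
      using sbeq_ctx[OF L(2), of "delta_pow n m @ A" "[]"] by simp
    also have "sbeq n ((delta_pow n m @ A) @ (inv_word (delta n) @ L) @ []) (delta_pow n m @ (A @ inv_word (delta n)) @ L)"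
      by (simp add: sbeq_refl)
    also have "sbeq n (delta_pow n m @ (A @ inv_word (delta n)) @ L) (delta_pow n m @ (inv_word (delta n) @ A') @ L)"
      by (rule sbeq_ctx, rule A'(2))
    also have "sbeq n (delta_pow n m @ (inv_word (delta n) @ A') @ L) ([] @ (delta_pow n m @ inv_word (delta n)) @ (A' @ L))"
      by (simp add: sbeq_refl)
    also have "sbeq n ([] @ (delta_pow n m @ inv_word (delta n)) @ (A' @ L)) ([] @ delta_pow n (m-1) @ (A' @ L))"
      by (rule sbeq_ctx, rule dp_minus)
    finally show ?thesis using A'(1) L(1) by (intro exI[of _ "m-1"] exI[of _ "A' @ L"]) (auto simp: pos_word_app)
  qed
qed



fun ev :: "gen \<Rightarrow> int" where
  "ev (S _) = 1" | "ev (Si _) = -1" | "ev (X _) = 0"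

definition esum :: "gen list \<Rightarrow> int" where "esum w = sum_list (map ev w)"

lemma esum_Nil[simp]: "esum [] = 0" by (simp add: esum_def)
lemma esum_app[simp]: "esum (a @ b) = esum a + esum b" by (simp add: esum_def)

lemma esum_sbeq: "sbeq n a b \<Longrightarrow> esum a = esum b"
  unfolding sbeq_def
  by (rule rtc_inv[where f=esum]) (auto simp: sb_rels_def pos_rels_def esum_def)

lemma length_peq: "peq n a b \<Longrightarrow> length a = length b"
  unfolding peq_def
  by (rule rtc_inv[where f=length]) (auto simp: pos_rels_def)

lemma esum_inv: "esum (inv_word g) = - esum g"
proof (induction g)
  case (Cons a g) then show ?case by (cases a) (auto simp: inv_word_Cons esum_def)
qed (simp add: esum_def)

lemma esum_rep: "esum (concat (replicate k w)) = int k * esum w"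
  by (induction k) (auto simp: algebra_simps)

lemma esum_dp: "esum (delta_pow n m) = m * esum (delta n)"
  by (simp add: delta_pow_def esum_rep esum_inv)

lemma esum_pos: "pos_word n A \<Longrightarrow> esum A \<ge> 0"
proof (induction A)
  case (Cons a A) then show ?case by (cases a) (auto simp: pos_word_Cons esum_def)
qed (simp add: esum_def)

lemma esum_nonneg: "(\<forall>x\<in>set w. ev x \<ge> 0) \<Longrightarrow> esum w \<ge> 0"
  by (induction w) (auto simp: esum_def)

lemma esum_mem: "(\<forall>x\<in>set w. ev x \<ge> 0) \<Longrightarrow> a \<in> set w \<Longrightarrow> ev a \<le> esum w"
proof (induction w)
  case (Cons b w)
  then show ?case
  proof (cases "a = b")
    case True
    have "esum w \<ge> 0" using Cons.prems by (intro esum_nonneg) auto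
    then show ?thesis using True by (simp add: esum_def)
  next
    case False then show ?thesis using Cons by (simp add: esum_def)
  qed
qed simp

lemma esum_delta: assumes "n \<ge> 2" shows "esum (delta n) \<ge> 1"
proof -
  have "S 1 \<in> set (delta n)" using assms by (auto simp: delta_DD set_DD)
  moreover have "\<forall>x\<in>set (delta n). 0 \<le> ev x" by (auto simp: delta_def)
  ultimately have "ev (S 1) \<le> esum (delta n)" using esum_mem by blast
  thus ?thesis by simp
qed

lemma pow_bound: assumes n: "n \<ge> 2" and A: "pos_word n A" and W: "sbeq n W (delta_pow n m @ A)"
  shows "m \<le> \<bar>esum W\<bar>"
proof -
  have e: "esum W = m * esum (delta n) + esum A" using esum_sbeq[OF W] by (simp add: esum_dp)
  have d: "esum (delta n) \<ge> 1" by (rule esum_delta[OF n])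
  have a: "esum A \<ge> 0" by (rule esum_pos[OF A])
  show ?thesis
  proof (cases "m \<le> 0")
    case False
    hence "m \<le> m * esum (delta n)" using d by (simp add: mult_le_cancel_left1)
    thus ?thesis using e a by linarith
  qed simp
qed

lemma int_max: assumes "P (x::int)" "\<forall>y. P y \<longrightarrow> y \<le> b"
  shows "\<exists>z. P z \<and> (\<forall>y. P y \<longrightarrow> y \<le> z)"
proof -
  define Q where "Q = {y. P y \<and> x \<le> y}"
  have fin: "finite Q" by (rule finite_subset[of _ "{x..b}"]) (use assms in \<open>auto simp: Q_def\<close>)
  have ne: "x \<in> Q" using assms by (simp add: Q_def)
  define z where "z = Max Q"
  have "z \<in> Q" using fin ne unfolding z_def by (intro Max_in) auto
  moreover have "\<forall>y. P y \<longrightarrow> y \<le> z"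
  proof (intro allI impI)
    fix y assume "P y"
    show "y \<le> z"
    proof (cases "x \<le> y")
      case True
      hence "y \<in> Q" using \<open>P y\<close> by (simp add: Q_def)
      thus ?thesis using fin by (simp add: z_def)
    next
      case False thus ?thesis using \<open>z \<in> Q\<close> by (simp add: Q_def)
    qed
  qed
  ultimately show ?thesis by (auto simp: Q_def)
qed

lemma gkey_inj: "inj_on (gkey n) {a. 1 \<le> gidx a \<and> gidx a \<le> n-1 \<and> is_pos_gen a}"
proof (rule inj_onI)
  fix a b assume "a \<in> {a. 1 \<le> gidx a \<and> gidx a \<le> n-1 \<and> is_pos_gen a}" "b \<in> {a. 1 \<le> gidx a \<and> gidx a \<le> n-1 \<and> is_pos_gen a}" "gkey n a = gkey n b"
  thus "a = b" by (cases a; cases b) auto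
qed

lemma lex_min: assumes A: "pos_word n A"
  shows "\<exists>B. pos_word n B \<and> peq n B A \<and> (\<forall>B'. pos_word n B' \<and> peq n B' B \<longrightarrow> lex_le n B B')"
proof -
  define M where "M = {B. pos_word n B \<and> peq n B A}"
  define R where "R = inv_image (lenlex {(p,q::nat). p<q}) (map (gkey n))"
  have wf: "wf R" unfolding R_def by (intro wf_inv_image wf_lenlex wf_less)
  have AM: "A \<in> M" using A by (simp add: M_def peq_refl)
  obtain B where BM: "B \<in> M" and Bmin: "\<And>y. (y, B) \<in> R \<Longrightarrow> y \<notin> M"
    using wfE_min[OF wf AM] by blast
  have "\<forall>B'. pos_word n B' \<and> peq n B' B \<longrightarrow> lex_le n B B'"
  proof (intro allI impI)
    fix B' assume h: "pos_word n B' \<and> peq n B' B"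
    hence B'M: "B' \<in> M" using BM by (auto simp: M_def intro: peq_trans)
    have len: "length B' = length B" using h length_peq by blast
    have tot: "(map (gkey n) B, map (gkey n) B') \<in> lexord {(p,q::nat). p<q} \<or> map (gkey n) B = map (gkey n) B'
       \<or> (map (gkey n) B', map (gkey n) B) \<in> lexord {(p,q::nat). p<q}"
      by (rule lexord_linear) auto
    show "lex_le n B B'"
    proof -
      { assume "(map (gkey n) B', map (gkey n) B) \<in> lexord {(p,q::nat). p<q}"
        hence "(B', B) \<in> R" using len by (simp add: R_def lenlex_conv lexord_lex)
        hence False using Bmin B'M by blast }
      moreover
      { assume e: "map (gkey n) B = map (gkey n) B'"
        have "inj_on (gkey n) (set B \<union> set B')"
          by (rule inj_on_subset[OF gkey_inj]) (use BM h in \<open>auto simp: M_def pos_word_def valid_word_def\<close>)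
        hence "B = B'" using map_inj_on[OF e] by blast }
      ultimately show ?thesis using tot by (auto simp: lex_le_def)
    qed
  qed
  thus ?thesis using BM by (auto simp: M_def)
qed

lemma nf_exists: assumes n: "n \<ge> 2" and u: "valid_word n u"
  shows "\<exists>m A. is_garside_nf n u m A"
proof -
  define P where "P m = (\<exists>A. pos_word n A \<and> sbeq n u (delta_pow n m @ A))" for m
  obtain m0 where "P m0" using E1[OF n u] by (auto simp: P_def)
  moreover have "\<forall>y. P y \<longrightarrow> y \<le> \<bar>esum u\<bar>" using pow_bound[OF n] by (auto simp: P_def)
  ultimately obtain m where Pm: "P m" and mmax: "\<forall>y. P y \<longrightarrow> y \<le> m" using int_max by blast
  then obtain A where A: "pos_word n A" "sbeq n u (delta_pow n m @ A)" by (auto simp: P_def)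
  obtain B where B: "pos_word n B" "peq n B A" "\<forall>B'. pos_word n B' \<and> peq n B' B \<longrightarrow> lex_le n B B'"
    using lex_min[OF A(1)] by blast
  have "sbeq n (delta_pow n m @ A @ []) (delta_pow n m @ B @ [])"
    by (rule sbeq_ctx[OF peq_sbeq[OF peq_sym[OF B(2)]]])
  hence uB: "sbeq n u (delta_pow n m @ B)" using sbeq_trans[OF A(2)] by simp
  have nodiv: "\<not> (\<exists>Z. pos_word n Z \<and> peq n B (delta n @ Z))"
  proof
    assume "\<exists>Z. pos_word n Z \<and> peq n B (delta n @ Z)"
    then obtain Z where Z: "pos_word n Z" "peq n B (delta n @ Z)" by blast
    have "sbeq n (delta_pow n m @ B @ []) (delta_pow n m @ (delta n @ Z) @ [])"
      by (rule sbeq_ctx[OF peq_sbeq[OF Z(2)]])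
    hence "sbeq n u (delta_pow n m @ delta n @ Z)" using sbeq_trans[OF uB] by simp
    also have "sbeq n (delta_pow n m @ delta n @ Z) (delta_pow n (m+1) @ Z)"
      using sbeq_ctx[OF dp_plus[of n m], of "[]" Z] by simp
    finally have "P (m+1)" using Z(1) by (auto simp: P_def)
    thus False using mmax by fastforce
  qed
  have "is_garside_nf n u m B" unfolding is_garside_nf_def using B uB nodiv by blast
  thus ?thesis by blast
qed



lemma conj_refl: "sb_conj n u u"
  unfolding sb_conj_def by (auto intro!: exI[of _ "[]"] sbeq_refl)

lemma conj_sym: assumes "sb_conj n u v" shows "sb_conj n v u"
proof -
  from assms obtain g where g: "braid_word n g" "sbeq n v (inv_word g @ u @ g)" unfolding sb_conj_def by blast
  have "sbeq n (g @ v @ inv_word g) (g @ (inv_word g @ u @ g) @ inv_word g)"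
    by (rule sbeq_ctx[OF g(2)])
  also have "sbeq n (g @ (inv_word g @ u @ g) @ inv_word g) ((g @ inv_word g) @ u @ (g @ inv_word g))"
    by (simp add: sbeq_refl)
  also have "sbeq n ((g @ inv_word g) @ u @ (g @ inv_word g)) ([] @ u @ [])"
    by (rule sbeq_app[OF braid_cancel[OF g(1)] sbeq_app[OF sbeq_refl braid_cancel[OF g(1)]]])
  finally have "sbeq n u (inv_word (inv_word g) @ v @ inv_word g)" by (simp add: sbeq_sym)
  thus ?thesis unfolding sb_conj_def using braid_inv[OF g(1)] by blast
qed

lemma conj_trans: assumes "sb_conj n u v" "sb_conj n v w" shows "sb_conj n u w"
proof -
  from assms obtain g h where g: "braid_word n g" "sbeq n v (inv_word g @ u @ g)"
    and h: "braid_word n h" "sbeq n w (inv_word h @ v @ h)" unfolding sb_conj_def by blast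
  have "sbeq n w (inv_word h @ (inv_word g @ u @ g) @ h)"
    using sbeq_trans[OF h(2) sbeq_ctx[OF g(2)]] by blast
  hence "sbeq n w (inv_word (g @ h) @ u @ (g @ h))" by (simp add: inv_word_app)
  moreover have "braid_word n (g @ h)" using g h by (simp add: braid_word_app)
  ultimately show ?thesis unfolding sb_conj_def by blast
qed

lemma conj_sbeq: "sb_conj n u v \<Longrightarrow> sbeq n v w \<Longrightarrow> sb_conj n u w"
  unfolding sb_conj_def by (meson sbeq_sym sbeq_trans)

lemma conj_esum: "sb_conj n u v \<Longrightarrow> esum u = esum v"
  unfolding sb_conj_def by (auto dest!: esum_sbeq simp: esum_inv)

lemma summit_nonempty: assumes n: "n \<ge> 2" and u: "valid_word n u"
  shows "\<exists>A. (summit_power n u, A) \<in> summit_set n u"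
proof -
  define P where "P m = (\<exists>W' A. valid_word n W' \<and> sb_conj n u W' \<and> is_garside_nf n W' m A)" for m
  obtain m0 A0 where "is_garside_nf n u m0 A0" using nf_exists[OF n u] by blast
  hence "P m0" using u conj_refl unfolding P_def by blast
  moreover have "\<forall>y. P y \<longrightarrow> y \<le> \<bar>esum u\<bar>"
  proof (intro allI impI)
    fix y assume "P y"
    then obtain W' A where W: "sb_conj n u W'" "is_garside_nf n W' y A" unfolding P_def by blast
    have "y \<le> \<bar>esum W'\<bar>" using W(2) pow_bound[OF n] unfolding is_garside_nf_def by blast
    thus "y \<le> \<bar>esum u\<bar>" using conj_esum[OF W(1)] by simp
  qed
  ultimately obtain z where z: "P z" "\<forall>y. P y \<longrightarrow> y \<le> z" using int_max by blast
  have "summit_power n u = z" unfolding summit_power_def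
    using z by (fold P_def) (rule Greatest_equality; auto)
  thus ?thesis using z(1) unfolding P_def summit_set_def by auto
qed

theorem theorem3p2:
  fixes n :: nat and u v :: "gen list"
  assumes "n \<ge> 2" and "valid_word n u" and "valid_word n v"
  shows "sb_conj n u v \<longleftrightarrow> summit_set n u = summit_set n v"
proof
  assume C: "sb_conj n u v"
  have eq: "\<And>W. sb_conj n u W = sb_conj n v W"
    using C conj_sym conj_trans by blast
  have "summit_power n u = summit_power n v" unfolding summit_power_def by (simp add: eq)
  thus "summit_set n u = summit_set n v" unfolding summit_set_def by (simp add: eq)
next
  assume E: "summit_set n u = summit_set n v"
  obtain A where "(summit_power n u, A) \<in> summit_set n u" using summit_nonempty assms by blast
  then have a: "(summit_power n u, A) \<in> summit_set n u" "(summit_power n u, A) \<in> summit_set n v" using E by auto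
  from a(1) obtain W1 where W1: "sb_conj n u W1" "is_garside_nf n W1 (summit_power n u) A"
    unfolding summit_set_def by blast
  from a(2) obtain W2 where W2: "sb_conj n v W2" "is_garside_nf n W2 (summit_power n u) A"
    unfolding summit_set_def by blast
  have "sbeq n W1 W2" using W1(2) W2(2) unfolding is_garside_nf_def by (meson sbeq_sym sbeq_trans)
  hence "sb_conj n u W2" using conj_sbeq W1(1) by blast
  thus "sb_conj n u v" using conj_trans conj_sym W2(1) by blast
qed


end
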